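(* Let $n\ge2$ and let $w_{12},w_{13},w_{23}$ be real numbers. For any sequence $S\in\mathcal{R}(n;1)$ (a minimal-length sequence transferring all $n$ disks from Peg 1 back to Peg 1 in which the largest disk is moved), played alternately by Anh (odd-numbered moves) and Bao (even-numbered moves), the total score (Anh's points minus Bao's points) is $\Delta_{11}(n)=3w_{23}-w_{12}-w_{13}$ if $n$ is odd, and $\Delta_{11}(n)=w_{12}+w_{13}-w_{23}$ if $n$ is even.
   Context: Tower of Hanoi on three pegs (labeled 1, 2, 3) with disks $1<2<\dots<n$ ordered by size; a legal move transfers the top disk of one peg to a different peg that is empty or has a larger top disk. A move between Peg $i$ and Peg $j$ (either direction) is a move along edge $\{i,j\}$ and earns the mover the real weight $w_{ij}=w_{ji}$. The minimal algorithm $\mathcal{M}(n;i\to j)$ ($i\ne j$, $k$ the third peg) is defined recursively: $\mathcal{M}(1;i\to j)$ is the single move of disk 1 from $i$ to $j$; for $n\ge2$, $\mathcal{M}(n;i\to j)$ is $\mathcal{M}(n-1;i\to k)$, then the move of disk $n$ from $i$ to $j$, then $\mathcal{M}(n-1;k\to j)$. For a peg $i$ and $n\ge2$, the set $\mathcal{R}(n;i)$ of minimal return sequences (each of length $2^{n+1}-1$) is defined recursively: for $\{i,a,b\}=\{1,2,3\}$ (either labeling of the two other pegs as $a,b$), $\mathcal{R}(n;i)$ contains the sequence $\mathcal{M}(n-1;i\to b)$, disk $n$ from $i$ to $a$, $\mathcal{M}(n-1;b\to i)$, disk $n$ from $a$ to $b$, $\mathcal{M}(n-1;i\to a)$, disk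 $n$ from $b$ to $i$, $\mathcal{M}(n-1;a\to i)$; and, if $n\ge3$, also every sequence $\mathcal{M}(n-1;i\to b)$, disk $n$ from $i$ to $a$, $T$, disk $n$ from $a$ to $i$, $\mathcal{M}(n-1;b\to i)$, where $T\in\mathcal{R}(n-1;b)$ (acting on disks $1,\dots,n-1$). When a move sequence is played in the two-player game, Anh makes moves $1,3,5,\dots$ and Bao makes moves $2,4,\dots$, each earning the weight of the moves they make. *)

theory Defs
  imports Main "HOL-Library.Multiset" Complex_Main
begin

text \<open>A move is a triple (disk, source peg, target peg); pegs are 1, 2, 3.\<close>
type_synonym move = "nat \<times> nat \<times> nat"

definition third_peg :: "nat \<Rightarrow> nat \<Rightarrow> nat" where
  "third_peg i j = 6 - i - j"

fun hanoi_M :: "nat \<Rightarrow> nat \<Rightarrow> nat \<Rightarrow> move list" where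
  "hanoi_M 0 i j = []"
| "hanoi_M (Suc n) i j =
     hanoi_M n i (third_peg i j) @ [(Suc n, i, j)] @ hanoi_M n (third_peg i j) j"

fun hanoi_Rset :: "nat \<Rightarrow> nat \<Rightarrow> move list set" where
  "hanoi_Rset 0 i = {}"
| "hanoi_Rset (Suc m) i =
    (if Suc m < 2 then {} else
     {hanoi_M m i b @ [(Suc m, i, a)] @ hanoi_M m b i @ [(Suc m, a, b)]
        @ hanoi_M m i a @ [(Suc m, b, i)] @ hanoi_M m a i
      | a b. {i, a, b} = {1, 2, 3} \<and> i \<noteq> a \<and> i \<noteq> b \<and> a \<noteq> b}
     \<union>
     {hanoi_M m i b @ [(Suc m, i, a)] @ T @ [(Suc m, a, i)] @ hanoi_M m b i
        | a b T. Suc m \<ge> 3 \<and> {i, a, b} = {1, 2, 3} \<and> i \<noteq> a \<and> i \<noteq> b \<and> a \<noteq> b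
               \<and> T \<in> hanoi_Rset m b})"

definition edge_weight :: "real \<Rightarrow> real \<Rightarrow> real \<Rightarrow> nat \<Rightarrow> nat \<Rightarrow> real" where
  "edge_weight w12 w13 w23 p q =
     (if {p, q} = {1, 2} then w12 else if {p, q} = {1, 3} then w13
      else if {p, q} = {2, 3} then w23 else 0)"

text \<open>Anh makes moves 1,3,5,... (0-based indices 0,2,4,...), Bao the others;
  score = Anh's points minus Bao's points.\<close>
definition game_score :: "real \<Rightarrow> real \<Rightarrow> real \<Rightarrow> move list \<Rightarrow> real" where
  "game_score w12 w13 w23 S =
     (\<Sum>k<length S. (if even k then 1 else -1) *
        edge_weight w12 w13 w23 (fst (snd (S ! k))) (snd (snd (S ! k))))"

end

theory Submission
  imports Defs
begin

lemma score_Nil: "game_score w12 w13 w23 [] = 0"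
  by (simp add: game_score_def)

lemma score_Cons:
  "game_score w12 w13 w23 ((d,p,q) # B) = edge_weight w12 w13 w23 p q - game_score w12 w13 w23 B"
  unfolding game_score_def
  by (auto simp add: sum.lessThan_Suc_shift sum_negf[symmetric] simp del: sum.lessThan_Suc intro!: sum.cong)

lemma score_append:
  "game_score w12 w13 w23 (A @ B) =
   game_score w12 w13 w23 A + (if even (length A) then 1 else -1) * game_score w12 w13 w23 B"
  by (induction A) (auto simp: score_Nil score_Cons)

lemma score_single: "game_score w12 w13 w23 [(d,p,q)] = edge_weight w12 w13 w23 p q"
  by (simp add: game_score_def)

lemma len_M: "length (hanoi_M n i j) = 2^n - 1"
  by (induction n arbitrary: i j) auto

lemma odd_len_M: "n > 0 \<Longrightarrow> odd (length (hanoi_M n i j))"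
  by (simp add: len_M)

lemma ew: "edge_weight w12 w13 w23 1 2 = w12" "edge_weight w12 w13 w23 2 1 = w12"
  "edge_weight w12 w13 w23 1 3 = w13" "edge_weight w12 w13 w23 3 1 = w13"
  "edge_weight w12 w13 w23 2 3 = w23" "edge_weight w12 w13 w23 3 2 = w23"
  by (simp_all add: edge_weight_def doubleton_eq_iff)

lemma ew': "edge_weight w12 w13 w23 (Suc 0) 2 = w12" "edge_weight w12 w13 w23 2 (Suc 0) = w12"
  "edge_weight w12 w13 w23 (Suc 0) 3 = w13" "edge_weight w12 w13 w23 3 (Suc 0) = w13"
  using ew by simp_all

lemma tp: "third_peg 1 2 = 3" "third_peg 2 1 = 3" "third_peg 1 3 = 2" "third_peg 3 1 = 2"
  "third_peg 2 3 = 1" "third_peg 3 2 = 1"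
  by (simp_all add: third_peg_def)

lemma score_M:
  assumes "i \<in> {1,2,3}" "j \<in> {1,2,3}" "i \<noteq> j"
  shows "game_score w12 w13 w23 (hanoi_M n i j) =
    (if n = 0 then 0 else if odd n then edge_weight w12 w13 w23 i j
     else w12 + w13 + w23 - 2 * edge_weight w12 w13 w23 i j)"
  using assms
proof (induction n arbitrary: i j)
  case 0
  then show ?case by (simp add: score_Nil)
next
  case (Suc n)
  show ?case
  proof (cases "n = 0")
    case True
    then show ?thesis by (simp add: score_Cons score_Nil)
  next
    case False
    have k: "third_peg i j \<in> {1,2,3}" "i \<noteq> third_peg i j" "third_peg i j \<noteq> j"
      using Suc.prems by (auto simp: third_peg_def)
    have "game_score w12 w13 w23 (hanoi_M (Suc n) i j) =
       game_score w12 w13 w23 (hanoi_M n i (third_peg i j)) - edge_weight w12 w13 w23 i j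
       + game_score w12 w13 w23 (hanoi_M n (third_peg i j) j)"
      using False by (simp add: score_append odd_len_M score_Cons score_Nil)
    also have "\<dots> = (if odd (Suc n) then edge_weight w12 w13 w23 i j
     else w12 + w13 + w23 - 2 * edge_weight w12 w13 w23 i j)"
      using Suc.IH[of i "third_peg i j"] Suc.IH[of "third_peg i j" j] k Suc.prems False
      by (auto simp: tp ew ew')
    finally show ?thesis by simp
  qed
qed

lemma peg_cases:
  assumes "{i, a, b} = {1, 2, 3::nat}" "i \<noteq> a" "i \<noteq> b" "a \<noteq> b"
  shows "(i,a,b) \<in> {(1,2,3),(1,3,2),(2,1,3),(2,3,1),(3,1,2),(3,2,1)}"
proof -
  have "i \<in> {1,2,3}" "a \<in> {1,2,3}" "b \<in> {1,2,3}" using assms(1) by blast+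
  then show ?thesis using assms(2-4) by auto
qed

lemma score_R:
  assumes "n \<ge> 2" "i \<in> {1,2,3}" "S \<in> hanoi_Rset n i"
  shows "odd (length S) \<and> game_score w12 w13 w23 S =
    (let E = (if i = 1 then w23 else if i = 2 then w13 else w12) in
     if odd n then 4 * E - (w12 + w13 + w23) else (w12 + w13 + w23) - 2 * E)"
  using assms
proof (induction n arbitrary: i S)
  case 0
  then show ?case by simp
next
  case (Suc m)
  have m: "m > 0" using Suc.prems by simp
  from Suc.prems(3) consider
    (A) a b where "{i, a, b} = {1, 2, 3}" "i \<noteq> a" "i \<noteq> b" "a \<noteq> b"
      "S = hanoi_M m i b @ [(Suc m, i, a)] @ hanoi_M m b i @ [(Suc m, a, b)]
        @ hanoi_M m i a @ [(Suc m, b, i)] @ hanoi_M m a i"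
  | (B) a b T where "Suc m \<ge> 3" "{i, a, b} = {1, 2, 3}" "i \<noteq> a" "i \<noteq> b" "a \<noteq> b"
      "T \<in> hanoi_Rset m b"
      "S = hanoi_M m i b @ [(Suc m, i, a)] @ T @ [(Suc m, a, i)] @ hanoi_M m b i"
    using Suc.prems(1) by (auto split: if_splits)
  then show ?case
  proof cases
    case A
    have P: "(i,a,b) \<in> {(1,2,3),(1,3,2),(2,1,3),(2,3,1),(3,1,2),(3,2,1)}"
      using peg_cases[OF A(1-4)] .
    have mem: "i \<in> {1,2,3}" "a \<in> {1,2,3}" "b \<in> {1,2,3}" using A(1) by blast+
    have len: "odd (length S)" using A(5) m by (simp add: odd_len_M)
    have sc: "game_score w12 w13 w23 S =
       game_score w12 w13 w23 (hanoi_M m i b) - edge_weight w12 w13 w23 i a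
       + game_score w12 w13 w23 (hanoi_M m b i) - edge_weight w12 w13 w23 a b
       + game_score w12 w13 w23 (hanoi_M m i a) - edge_weight w12 w13 w23 b i
       + game_score w12 w13 w23 (hanoi_M m a i)"
      using A(5) m by (simp add: score_append odd_len_M score_Cons)
    show ?thesis
      using P len m unfolding sc
      by (auto simp: score_M ew ew' Let_def)
  next
    case B
    have P: "(i,a,b) \<in> {(1,2,3),(1,3,2),(2,1,3),(2,3,1),(3,1,2),(3,2,1)}"
      using peg_cases[OF B(2-5)] .
    have mem: "b \<in> {1,2,3}" using B(2) by blast
    have IH: "odd (length T) \<and> game_score w12 w13 w23 T =
    (let E = (if b = 1 then w23 else if b = 2 then w13 else w12) in
     if odd m then 4 * E - (w12 + w13 + w23) else (w12 + w13 + w23) - 2 * E)"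
      using Suc.IH[OF _ mem B(6)] B(1) by simp
    have len: "odd (length S)" using B(7) m IH by (simp add: odd_len_M)
    have sc: "game_score w12 w13 w23 S =
       game_score w12 w13 w23 (hanoi_M m i b) - edge_weight w12 w13 w23 i a
       + game_score w12 w13 w23 T - edge_weight w12 w13 w23 a i
       + game_score w12 w13 w23 (hanoi_M m b i)"
      using B(7) m IH by (simp add: score_append odd_len_M score_Cons)
    show ?thesis
      using P len m IH unfolding sc
      by (auto simp: score_M ew ew' Let_def)
  qed
qed

theorem lemma2:
  fixes n :: nat and w12 w13 w23 :: real and S :: "move list"
  assumes "n \<ge> 2"
    and "S \<in> hanoi_Rset n 1"
  shows "game_score w12 w13 w23 S =
           (if odd n then 3 * w23 - w12 - w13 else w12 + w13 - w23)"
  using score_R[OF assms(1) _ assms(2), of w12 w13 w23] by (auto simp: Let_def)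

end
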